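(* Let $k\ge 3$ and let $K_{2k-1}$ denote the simplicial complex given by the standard Gale diagram which places the vertex $i$ at $v_i$ for $i=1,\dots,2k-1$ (the boundary complex of the dual of $P_{[2k-1]}$). Let $J=(a_1,\dots,a_{2k-1})$ be a vector of positive integers. Then $K_{2k-1}(J)$ is (isomorphic to) the simplicial complex given by the standard Gale diagram with $a_i$ points at $v_i$ for each $i$; in polytope language, $P_{[2k-1]}(J)=[a_1,\dots,a_{2k-1}]$.
   Context: Let $v_1,\dots,v_{2k-1}$ be the vertices, in counterclockwise order, of a regular $(2k-1)$-gon in $\mathbb{R}^2$ centered at the origin $O$. A standard Gale diagram is a surjection $\phi$ from a finite set $V$ to $\{v_1,\dots,v_{2k-1}\}$; it determines the simplicial complex on $V$ in which $I\subseteq V$ is a face iff $O\in\operatorname{conv}\{\phi(j):j\in V\setminus I\}$. With $a_i=|\phi^{-1}(v_i)|$, the simple polytope dual to the simplicial polytope with this boundary complex is denoted $[a_1,\dots,a_{2k-1}]$, and $P_{[2k-1]}=[1,\dots,1]$ with facet $i$ corresponding to $v_i$. For a complex $K$ on $[m]$ and $J=(j_1,\dots,j_m)$ positive integers, $K(J)$ is the complex on vertices $i_1,\dots,i_{j_i}$ whose minimal non-faces are the sets $\bigcup_{r}\{(i_r)_1,\dots,(i_r)_{j_{i_r}}\}$ for minimal non-faces $\{i_1,\dots,i_s\}$ of $K$; $P(J)$ denotes the simple polytope whose dual boundary complex is $K(J)$ when $K$ is that of $P$. *)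

theory Defs
  imports "HOL-Analysis.Analysis"
begin

definition gale_vertex :: "nat \<Rightarrow> nat \<Rightarrow> complex" where
  "gale_vertex n i = cis (2 * pi * real i / real n)"

definition gale_complex :: "nat \<Rightarrow> 'a set \<Rightarrow> ('a \<Rightarrow> nat) \<Rightarrow> 'a set set" where
  "gale_complex n V phi =
     {I. I \<subseteq> V \<and> (0::complex) \<in> convex hull ((\<lambda>j. gale_vertex n (phi j)) ` (V - I))}"

definition min_nonfaces :: "'a set \<Rightarrow> 'a set set \<Rightarrow> 'a set set" where
  "min_nonfaces V K = {N. N \<subseteq> V \<and> N \<notin> K \<and> (\<forall>N'. N' \<subset> N \<longrightarrow> N' \<in> K)}"

text \<open>Vertex set of K(J) for K on {0..m-1}: vertex i is replaced by (i,0),...,(i,J i - 1).\<close>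
definition wedge_vertices :: "nat \<Rightarrow> (nat \<Rightarrow> nat) \<Rightarrow> (nat \<times> nat) set" where
  "wedge_vertices m J = {(i, r). i < m \<and> r < J i}"

text \<open>K(J): the complex on wedge_vertices whose minimal non-faces are the sets
  U_{i in N} {(i,0),...,(i,J i - 1)} for minimal non-faces N of K; i.e. faces are the subsets
  containing none of these sets.\<close>
definition wedge_complex :: "nat \<Rightarrow> nat set set \<Rightarrow> (nat \<Rightarrow> nat) \<Rightarrow> (nat \<times> nat) set set" where
  "wedge_complex m K J =
     {\<sigma>. \<sigma> \<subseteq> wedge_vertices m J \<and>
          (\<forall>N \<in> min_nonfaces {..<m} K. \<not> (\<Union>i\<in>N. {i} \<times> {..<J i}) \<subseteq> \<sigma>)}"

definition simp_iso :: "'a set \<Rightarrow> 'a set set \<Rightarrow> 'b set \<Rightarrow> 'b set set \<Rightarrow> bool" where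
  "simp_iso V1 K1 V2 K2 \<longleftrightarrow>
     (\<exists>f. bij_betw f V1 V2 \<and> (\<forall>\<sigma>. \<sigma> \<subseteq> V1 \<longrightarrow> (\<sigma> \<in> K1 \<longleftrightarrow> f ` \<sigma> \<in> K2)))"

end

theory Submission
  imports Defs
begin

lemma face_iff_no_mnf:
  fixes K :: "'b set set"
  assumes fin: "finite B" and CB: "C \<subseteq> B"
    and down: "\<And>A A'. A \<in> K \<Longrightarrow> A' \<subseteq> A \<Longrightarrow> A' \<in> K"
  shows "C \<in> K \<longleftrightarrow> (\<forall>N\<in>min_nonfaces B K. \<not> N \<subseteq> C)"
proof
  assume "C \<in> K" then show "\<forall>N\<in>min_nonfaces B K. \<not> N \<subseteq> C"
    using down unfolding min_nonfaces_def by blast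
next
  assume H: "\<forall>N\<in>min_nonfaces B K. \<not> N \<subseteq> C"
  show "C \<in> K"
  proof (rule ccontr)
    assume nC: "C \<notin> K"
    let ?S = "{N. N \<subseteq> C \<and> N \<notin> K}"
    have finS: "finite ?S" using fin CB
      by (metis (no_types, lifting) finite_Pow_iff finite_subset mem_Collect_eq PowI subsetI)
    have neS: "?S \<noteq> {}" using nC by blast
    obtain N where N: "N \<in> ?S" and mn: "\<forall>b\<in>?S. b \<le> N \<longrightarrow> N = b"
      using finite_has_minimal[OF finS neS] by blast
    have "N \<in> min_nonfaces B K"
      unfolding min_nonfaces_def using N mn CB by auto
    then show False using H N by blast
  qed
qed

lemma gale_down:
  assumes "A \<in> gale_complex n V phi" "A' \<subseteq> A"
  shows "A' \<in> gale_complex n V phi"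
proof -
  have "(\<lambda>j. gale_vertex n (phi j)) ` (V - A) \<subseteq> (\<lambda>j. gale_vertex n (phi j)) ` (V - A')"
    using assms(2) by auto
  then have "convex hull ((\<lambda>j. gale_vertex n (phi j)) ` (V - A)) \<subseteq>
             convex hull ((\<lambda>j. gale_vertex n (phi j)) ` (V - A'))"
    by (rule hull_mono)
  then show ?thesis using assms unfolding gale_complex_def by auto
qed

theorem lemma6p4:
  fixes k :: nat and J :: "nat \<Rightarrow> nat" and V :: "'a set" and phi :: "'a \<Rightarrow> nat"
  assumes "k \<ge> 3"
    and "\<forall>i < 2*k-1. J i > 0"
    and "finite V"
    and "phi ` V = {..<2*k-1}"
    and "\<forall>i < 2*k-1. card {x \<in> V. phi x = i} = J i"
  shows "simp_iso (wedge_vertices (2*k-1) J)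
                  (wedge_complex (2*k-1) (gale_complex (2*k-1) {..<2*k-1} id) J)
                  V (gale_complex (2*k-1) V phi)"
proof -
  define n where "n = 2*k-1"
  define F where "F i = {x \<in> V. phi x = i}" for i
  have ex: "\<exists>h. bij_betw h {..<J i} (F i)" if "i < n" for i
  proof (rule finite_same_card_bij)
    show "finite {..<J i}" by simp
    show "finite (F i)" using assms(3) unfolding F_def by simp
    show "card {..<J i} = card (F i)" using assms(5) that unfolding F_def n_def by simp
  qed
  define h where "h i = (SOME h. bij_betw h {..<J i} (F i))" for i
  have hb: "bij_betw (h i) {..<J i} (F i)" if "i < n" for i
    unfolding h_def using someI_ex[OF ex[OF that]] .
  define f where "f = (\<lambda>(i,r). h i r)"
  define W where "W = wedge_vertices n J"
  have fphi: "phi (f (i,r)) = i" "f (i,r) \<in> V" if "(i,r) \<in> W" for i r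
  proof -
    have "i < n" "r < J i" using that unfolding W_def wedge_vertices_def by auto
    then have "h i r \<in> F i" using hb bij_betw_apply by fastforce
    then show "phi (f (i,r)) = i" "f (i,r) \<in> V" unfolding f_def F_def by auto
  qed
  have bij: "bij_betw f W V"
  proof (rule bij_betw_imageI)
    show "inj_on f W"
    proof (rule inj_onI)
      fix a b assume a: "a \<in> W" and b: "b \<in> W" and e: "f a = f b"
      obtain i r where ai: "a = (i,r)" by force
      obtain j s where bj: "b = (j,s)" by force
      have "i = j" using fphi(1)[of i r] fphi(1)[of j s] a b e ai bj by metis
      moreover have "r < J i" "s < J i" "i < n"
        using a b ai bj \<open>i = j\<close> unfolding W_def wedge_vertices_def by auto
      moreover have "h i r = h i s" using e ai bj \<open>i = j\<close> unfolding f_def by simp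
      ultimately show "a = b" using hb[of i] ai bj unfolding bij_betw_def inj_on_def by auto
    qed
    show "f ` W = V"
    proof
      show "f ` W \<subseteq> V" using fphi(2) by auto
      show "V \<subseteq> f ` W"
      proof
        fix x assume x: "x \<in> V"
        have i: "phi x < n" using assms(4) x unfolding n_def by auto
        then have "x \<in> h (phi x) ` {..<J (phi x)}" using hb[OF i] x
          unfolding bij_betw_def F_def by auto
        then obtain r where "r < J (phi x)" "x = h (phi x) r" by auto
        then show "x \<in> f ` W" unfolding f_def W_def wedge_vertices_def using i
          by (auto intro!: image_eqI[where x="(phi x, r)"])
      qed
    qed
  qed
  let ?K = "gale_complex n {..<n} id"
  have main: "\<sigma> \<in> wedge_complex n ?K J \<longleftrightarrow> f ` \<sigma> \<in> gale_complex n V phi"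
    if s: "\<sigma> \<subseteq> W" for \<sigma>
  proof -
    define C where "C = {i. i < n \<and> {i} \<times> {..<J i} \<subseteq> \<sigma>}"
    have CB: "C \<subseteq> {..<n}" unfolding C_def by auto
    have L: "\<sigma> \<in> wedge_complex n ?K J \<longleftrightarrow> (\<forall>N\<in>min_nonfaces {..<n} ?K. \<not> N \<subseteq> C)"
    proof -
      have "(\<Union>i\<in>N. {i} \<times> {..<J i}) \<subseteq> \<sigma> \<longleftrightarrow> N \<subseteq> C"
        if "N \<in> min_nonfaces {..<n} ?K" for N
      proof -
        have "N \<subseteq> {..<n}" using that unfolding min_nonfaces_def by blast
        then show ?thesis unfolding C_def by blast
      qed
      then show ?thesis using s unfolding wedge_complex_def W_def by auto
    qed
    have img: "phi ` (V - f ` \<sigma>) = {..<n} - C"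
    proof
      show "phi ` (V - f ` \<sigma>) \<subseteq> {..<n} - C"
      proof
        fix y assume "y \<in> phi ` (V - f ` \<sigma>)"
        then obtain x where x: "x \<in> V" "x \<notin> f ` \<sigma>" "y = phi x" by auto
        obtain a where a: "a \<in> W" "x = f a" using bij x(1) unfolding bij_betw_def by auto
        obtain i r where ai: "a = (i,r)" by force
        have "a \<notin> \<sigma>" using a x by auto
        moreover have "y = i" using fphi(1) a ai x by simp
        moreover have "r < J i" "i < n" using a ai unfolding W_def wedge_vertices_def by auto
        ultimately show "y \<in> {..<n} - C" unfolding C_def using ai by auto
      qed
      show "{..<n} - C \<subseteq> phi ` (V - f ` \<sigma>)"
      proof
        fix i assume i: "i \<in> {..<n} - C"
        then obtain r where r: "r < J i" "(i,r) \<notin> \<sigma>" unfolding C_def by auto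
        have w: "(i,r) \<in> W" using r i unfolding W_def wedge_vertices_def by auto
        have "f (i,r) \<notin> f ` \<sigma>"
        proof
          assume "f (i,r) \<in> f ` \<sigma>"
          then obtain b where "b \<in> \<sigma>" "f (i,r) = f b" by auto
          then have "b = (i,r)" using bij w s unfolding bij_betw_def inj_on_def by blast
          then show False using r \<open>b \<in> \<sigma>\<close> by simp
        qed
        then show "i \<in> phi ` (V - f ` \<sigma>)" using fphi[OF w]
          by (metis DiffI image_eqI)
      qed
    qed
    have fs: "f ` \<sigma> \<subseteq> V" using bij s unfolding bij_betw_def by auto
    have "(\<lambda>j. gale_vertex n (phi j)) ` (V - f ` \<sigma>) = gale_vertex n ` (phi ` (V - f ` \<sigma>))"
      by (simp add: image_image)
    also have "\<dots> = (\<lambda>j. gale_vertex n (id j)) ` ({..<n} - C)" using img by simp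
    finally have R: "f ` \<sigma> \<in> gale_complex n V phi \<longleftrightarrow> C \<in> ?K"
      using fs CB unfolding gale_complex_def by auto
    have "C \<in> ?K \<longleftrightarrow> (\<forall>N\<in>min_nonfaces {..<n} ?K. \<not> N \<subseteq> C)"
      by (rule face_iff_no_mnf[OF _ CB]) (auto intro: gale_down)
    then show ?thesis using L R by simp
  qed
  show ?thesis unfolding simp_iso_def n_def[symmetric] W_def[symmetric]
    using bij main by blast
qed

end
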